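(* Let $N\ge3$, $\gamma\in(0,1)$, assume $\chi$ satisfies (C1),(C2), and assume that for some $C_v>0$ the solution satisfies $v(r,t)\le C_v r^{2-N}$ for all $r\in(0,R)$, $t\in(0,T_{\max})$. Then there is $C>0$, depending only on $R,\chi_0,a,N,k,C_v$, such that for all $t\in(0,T_{\max})$ and $s_0\in(0,R^N)$, $$I_2(s_0,t)\ge C\int_0^{s_0}s^{-\gamma+(1-\frac2N)k}(s_0-s)w(s,t)w_s(s,t)\,ds .$$
   Context: Let $N\ge3$, $R>0$, $\Omega=B_R(0)\subset\mathbb{R}^N$, $m\ge1$, $\chi:(0,\infty)\to\mathbb{R}$. System (KS): $u_t=\Delta(u+1)^m-\nabla\cdot(u\chi(v)\nabla v)$, $0=\Delta v-v+u$ in $\Omega\times(0,\infty)$, $\partial_\nu u=\partial_\nu v=0$ on $\partial\Omega$, $u(\cdot,0)=u_0$, with $u_0\in C^0(\overline\Omega)\setminus\{0\}$ radially symmetric, nonnegative, $M_0=\int_\Omega u_0$. $\eta:=M_0\int_0^\infty(4\pi t)^{-N/2}e^{-(t+\frac{(2R)^2}{4t})}dt$. (C1): $\chi(s)\ge\chi_0(a+s)^{-k}$ for all $s>0$, with $\chi_0>0,a\ge0,k>0$. (C2): $\chi\in C^1((0,\infty))\cap L^\infty(\eta,\infty)$. $(u,v)$ denotes the maximal radial nonnegative classical solution on $[0,T_{\max})$; $u(r,t),v(r,t)$ with $r=|x|$. Define $w(s,t):=\int_0^{s^{1/N}}\rho^{N-1}u(\rho,t)d\rho$, $z(s,t):=\int_0^{s^{1/N}}\rho^{N-1}v(\rho,t)d\rho$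 for $s\in[0,R^N]$, and $I_2(s_0,t):=N\int_0^{s_0}s^{-\gamma}(s_0-s)\chi(Nz_s(s,t))w(s,t)w_s(s,t)\,ds$. *)

theory Defs
  imports "HOL-Analysis.Analysis"
begin

definition pd :: "(real^'n \<Rightarrow> real) \<Rightarrow> 'n \<Rightarrow> real^'n \<Rightarrow> real" where
  "pd f i x = deriv (\<lambda>h. f (x + h *\<^sub>R axis i 1)) 0"

definition grad :: "(real^'n \<Rightarrow> real) \<Rightarrow> real^'n \<Rightarrow> real^'n" where
  "grad f x = (\<chi> i. pd f i x)"

definition dvg :: "(real^'n \<Rightarrow> real^'n) \<Rightarrow> real^'n \<Rightarrow> real" where
  "dvg F x = (\<Sum>i\<in>UNIV. pd (\<lambda>y. F y $ i) i x)"

definition tint :: "ereal \<Rightarrow> real set" where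
  "tint T = {t. 0 < t \<and> ereal t < T}"

text \<open>u(.,t) belongs to C^2 on the closed ball, jointly continuously in (x,t) on
  closed ball times (0,T): derivatives exist in the interior and extend continuously.\<close>
definition C2x :: "real \<Rightarrow> ereal \<Rightarrow> (real^'n \<Rightarrow> real \<Rightarrow> real) \<Rightarrow> bool" where
  "C2x R T u \<longleftrightarrow>
     continuous_on (cball 0 R \<times> tint T) (\<lambda>(x,t). u x t) \<and>
     (\<forall>t\<in>tint T. \<forall>x\<in>ball 0 R.
        (\<lambda>y. u y t) differentiable (at x) \<and>
        (\<forall>i. (\<lambda>y. pd (\<lambda>z. u z t) i y) differentiable (at x))) \<and>
     (\<forall>i. \<exists>G. continuous_on (cball 0 R \<times> tint T) (\<lambda>(x,t). G x t) \<and>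
        (\<forall>t\<in>tint T. \<forall>x\<in>ball 0 R. G x t = pd (\<lambda>z. u z t) i x)) \<and>
     (\<forall>i j. \<exists>H. continuous_on (cball 0 R \<times> tint T) (\<lambda>(x,t). H x t) \<and>
        (\<forall>t\<in>tint T. \<forall>x\<in>ball 0 R. H x t = pd (\<lambda>y. pd (\<lambda>z. u z t) i y) j x))"

definition C21 :: "real \<Rightarrow> ereal \<Rightarrow> (real^'n \<Rightarrow> real \<Rightarrow> real) \<Rightarrow> bool" where
  "C21 R T u \<longleftrightarrow> C2x R T u \<and>
     (\<forall>t\<in>tint T. \<forall>x\<in>ball 0 R. (\<lambda>s. u x s) differentiable (at t)) \<and>
     (\<exists>Ut. continuous_on (cball 0 R \<times> tint T) (\<lambda>(x,t). Ut x t) \<and>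
        (\<forall>t\<in>tint T. \<forall>x\<in>ball 0 R. Ut x t = deriv (\<lambda>s. u x s) t))"

definition radial :: "real \<Rightarrow> (real^'n \<Rightarrow> real) \<Rightarrow> bool" where
  "radial R f \<longleftrightarrow> (\<forall>x\<in>cball 0 R. \<forall>y\<in>cball 0 R. norm x = norm y \<longrightarrow> f x = f y)"

text \<open>Nonnegative classical solution on [0,T). Since chi is only defined on (0,infinity),
  the classical meaning of chi(v) requires v > 0.\<close>
definition ks_sol :: "real \<Rightarrow> real \<Rightarrow> (real \<Rightarrow> real) \<Rightarrow> (real^'n \<Rightarrow> real) \<Rightarrow> ereal
    \<Rightarrow> (real^'n \<Rightarrow> real \<Rightarrow> real) \<Rightarrow> (real^'n \<Rightarrow> real \<Rightarrow> real) \<Rightarrow> bool" where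
  "ks_sol R m chi u0 T u v \<longleftrightarrow>
     0 < T \<and>
     continuous_on (cball 0 R \<times> {t. 0 \<le> t \<and> ereal t < T}) (\<lambda>(x,t). u x t) \<and>
     C21 R T u \<and> C2x R T v \<and>
     (\<forall>x\<in>cball 0 R. u x 0 = u0 x) \<and>
     (\<forall>x\<in>cball 0 R. \<forall>t\<in>tint T. 0 \<le> u x t \<and> 0 < v x t) \<and>
     (\<forall>x\<in>ball 0 R. \<forall>t\<in>tint T.
        deriv (\<lambda>s. u x s) t =
          dvg (\<lambda>y. grad (\<lambda>z. (u z t + 1) powr m) y) x
          - dvg (\<lambda>y. (u y t * chi (v y t)) *\<^sub>R grad (\<lambda>z. v z t) y) x) \<and>
     (\<forall>x\<in>ball 0 R. \<forall>t\<in>tint T.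
        0 = dvg (\<lambda>y. grad (\<lambda>z. v z t) y) x - v x t + u x t) \<and>
     (\<forall>x\<in>sphere 0 R. \<forall>t\<in>tint T.
        ((\<lambda>y. grad (\<lambda>z. u z t) y \<bullet> x) \<longlongrightarrow> 0) (at x within ball 0 R) \<and>
        ((\<lambda>y. grad (\<lambda>z. v z t) y \<bullet> x) \<longlongrightarrow> 0) (at x within ball 0 R))"

definition ks_maximal :: "real \<Rightarrow> real \<Rightarrow> (real \<Rightarrow> real) \<Rightarrow> (real^'n \<Rightarrow> real) \<Rightarrow> ereal
    \<Rightarrow> (real^'n \<Rightarrow> real \<Rightarrow> real) \<Rightarrow> (real^'n \<Rightarrow> real \<Rightarrow> real) \<Rightarrow> bool" where
  "ks_maximal R m chi u0 T u v \<longleftrightarrow>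
     ks_sol R m chi u0 T u v \<and>
     \<not> (\<exists>T' u' v'. T < T' \<and> ks_sol R m chi u0 T' u' v' \<and>
          (\<forall>x\<in>cball 0 R. \<forall>t. 0 \<le> t \<and> ereal t < T \<longrightarrow> u' x t = u x t \<and> v' x t = v x t))"

definition e1 :: "real^'n" where "e1 = axis (SOME i. True) 1"

definition prof :: "(real^'n \<Rightarrow> real \<Rightarrow> real) \<Rightarrow> real \<Rightarrow> real \<Rightarrow> real" where
  "prof f r t = f (r *\<^sub>R (e1::real^'n)) t"

definition wfun :: "(real^'n \<Rightarrow> real \<Rightarrow> real) \<Rightarrow> real \<Rightarrow> real \<Rightarrow> real" where
  "wfun u s t = integral {0 .. s powr (1 / real CARD('n))}
      (\<lambda>\<rho>. \<rho> ^ (CARD('n) - 1) * prof u \<rho> t)"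

definition I2 :: "real \<Rightarrow> (real \<Rightarrow> real) \<Rightarrow> (real^'n \<Rightarrow> real \<Rightarrow> real) \<Rightarrow> (real^'n \<Rightarrow> real \<Rightarrow> real)
    \<Rightarrow> real \<Rightarrow> real \<Rightarrow> real" where
  "I2 \<gamma> chi u v s0 t = real CARD('n) * integral {0..s0} (\<lambda>s.
      s powr (-\<gamma>) * (s0 - s) * chi (real CARD('n) * deriv (\<lambda>\<sigma>. wfun v \<sigma> t) s)
      * wfun u s t * deriv (\<lambda>\<sigma>. wfun u \<sigma> t) s)"

definition mass :: "real \<Rightarrow> (real^'n \<Rightarrow> real) \<Rightarrow> real" where
  "mass R u0 = integral (ball 0 R) u0"

definition eta :: "real \<Rightarrow> (real^'n \<Rightarrow> real) \<Rightarrow> real" where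
  "eta R u0 = mass R u0 * integral {0<..} (\<lambda>t::real.
      (4 * pi * t) powr (- real CARD('n) / 2) * exp (- (t + (2 * R)^2 / (4 * t))))"

definition cond_C1 :: "(real \<Rightarrow> real) \<Rightarrow> real \<Rightarrow> real \<Rightarrow> real \<Rightarrow> bool" where
  "cond_C1 chi chi0 a k \<longleftrightarrow> 0 < chi0 \<and> 0 \<le> a \<and> 0 < k \<and>
     (\<forall>s>0. chi s \<ge> chi0 * (a + s) powr (-k))"

text \<open>chi in C^1((0,inf)) and in L^inf(eta,inf) (chi is continuous there, so ess sup = sup).\<close>
definition cond_C2 :: "(real \<Rightarrow> real) \<Rightarrow> real \<Rightarrow> bool" where
  "cond_C2 chi \<eta> \<longleftrightarrow> (\<forall>s>0. chi differentiable (at s)) \<and>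
     continuous_on {0<..} (deriv chi) \<and> (\<exists>B. \<forall>s>\<eta>. \<bar>chi s\<bar> \<le> B)"

definition init_ok :: "real \<Rightarrow> (real^'n \<Rightarrow> real) \<Rightarrow> bool" where
  "init_ok R u0 \<longleftrightarrow> continuous_on (cball 0 R) u0 \<and> (\<forall>x\<in>cball 0 R. 0 \<le> u0 x) \<and>
     (\<exists>x\<in>cball 0 R. u0 x \<noteq> 0) \<and> radial R u0"

end

theory Submission
  imports Defs
begin

lemma int_powr_cont:
  fixes \<Phi> :: "real \<Rightarrow> real"
  assumes cont: "continuous_on {0..s0} \<Phi>" and g: "0 < \<gamma>" "\<gamma> < 1" and s0: "0 < s0"
  shows "(\<lambda>s. s powr (-\<gamma>) * \<Phi> s) integrable_on {0..s0}"
proof -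
  obtain B where B: "\<And>s. s \<in> {0..s0} \<Longrightarrow> norm (\<Phi> s) \<le> B"
    using compact_imp_bounded[OF compact_continuous_image[OF cont compact_Icc]]
    unfolding bounded_iff by (metis atLeastAtMost_iff image_eqI)
  have i1: "(\<lambda>s. B * s powr (-\<gamma>)) integrable_on {0<..s0}"
    using integrable_on_powr_from_0'[of "-\<gamma>" s0] g s0 by (intro integrable_on_mult_right) auto
  have c1: "continuous_on {0<..s0} (\<lambda>s. s powr (-\<gamma>) * \<Phi> s)"
    by (intro continuous_intros continuous_on_subset[OF cont]) auto
  have m1: "(\<lambda>s. s powr (-\<gamma>) * \<Phi> s) \<in> borel_measurable (lebesgue_on {0<..s0})"
    by (rule continuous_imp_measurable_on_sets_lebesgue[OF c1]) auto
  have "(\<lambda>s. s powr (-\<gamma>) * \<Phi> s) integrable_on {0<..s0}"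
  proof (rule measurable_bounded_by_integrable_imp_integrable_real[OF m1 i1])
    fix s :: real assume "s \<in> {0<..s0}"
    then have "\<bar>\<Phi> s\<bar> \<le> B" using B by auto
    then show "\<bar>s powr - \<gamma> * \<Phi> s\<bar> \<le> B * s powr - \<gamma>"
      by (simp add: abs_mult mult.commute mult_right_mono)
  qed auto
  then show ?thesis
    by (rule integrable_spike_set) (auto intro: negligible_subset[of "{0}"])
qed

lemma deriv_wf:
  fixes p :: "real \<Rightarrow> real" and n :: nat
  assumes cont: "continuous_on {0..R} p" and n: "n \<ge> 1" and s: "0 < s" "s powr (1/real n) < R"
  shows "deriv (\<lambda>\<sigma>. integral {0..\<sigma> powr (1/real n)} (\<lambda>\<rho>. \<rho>^(n-1) * p \<rho>)) s = p (s powr (1/real n)) / real n"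
proof -
  define r where "r = s powr (1/real n)"
  have r: "0 < r" "r < R" using s by (auto simp: r_def)
  have cP: "continuous_on {0..R} (\<lambda>\<rho>. \<rho>^(n-1) * p \<rho>)"
    by (intro continuous_intros cont)
  have "((\<lambda>x. integral {0..x} (\<lambda>\<rho>. \<rho>^(n-1) * p \<rho>)) has_vector_derivative (r^(n-1) * p r)) (at r within {0..R})"
    using integral_has_vector_derivative[OF cP, of r] r by auto
  moreover have "at r within {0..R} = at r"
    by (rule at_within_interior) (use r in auto)
  ultimately have d1: "((\<lambda>x. integral {0..x} (\<lambda>\<rho>. \<rho>^(n-1) * p \<rho>)) has_real_derivative (r^(n-1) * p r)) (at r)"
    by (simp add: has_real_derivative_iff_has_vector_derivative)
  have d2: "((\<lambda>z. z powr (1/real n)) has_real_derivative (1/real n) * s powr (1/real n - 1)) (at s)"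
    by (rule has_real_derivative_powr) (use s in auto)
  have d: "((\<lambda>\<sigma>. integral {0..\<sigma> powr (1/real n)} (\<lambda>\<rho>. \<rho>^(n-1) * p \<rho>)) has_real_derivative
      (r^(n-1) * p r) * ((1/real n) * s powr (1/real n - 1))) (at s)"
    using DERIV_chain2[OF d1[unfolded r_def] d2] by (simp add: r_def)
  have "r^(n-1) = s powr ((real n - 1) / real n)"
    using r s n by (simp add: r_def powr_realpow[symmetric] powr_powr of_nat_diff)
  then have "r^(n-1) * s powr (1/real n - 1) = 1"
    using s n by (simp add: powr_add[symmetric] diff_divide_distrib)
  then have "(r^(n-1) * p r) * ((1/real n) * s powr (1/real n - 1)) = p r / real n"
    by (metis (no_types, lifting) mult.commute mult.left_commute mult.right_neutral times_divide_eq_right divide_inverse mult_1_left)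
  with DERIV_imp_deriv[OF d] show ?thesis by (simp add: r_def)
qed

lemma cont_rootcomp:
  fixes q :: "real \<Rightarrow> real"
  assumes q: "continuous_on {0..R} q" and n: "0 < n" and s0: "0 \<le> s0" "s0 powr (1/n) \<le> R"
  shows "continuous_on {0..s0} (\<lambda>s. q (s powr (1/n)))"
proof (rule continuous_on_compose2[OF q])
  show "continuous_on {0..s0} (\<lambda>s. s powr (1/n))"
    by (rule continuous_on_powr') (use n in \<open>auto intro: continuous_intros\<close>)
  show "(\<lambda>s. s powr (1/n)) ` {0..s0} \<subseteq> {0..R}"
  proof
    fix y assume "y \<in> (\<lambda>s. s powr (1/n)) ` {0..s0}"
    then obtain s where "s \<in> {0..s0}" "y = s powr (1/n)" by auto
    then show "y \<in> {0..R}" using powr_mono2[of "1/n" s s0] n s0 by auto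
  qed
qed

lemma norm_e1: "norm (e1::real^'n) = 1"
  by (simp add: e1_def)

lemma prof_cont:
  fixes f :: "real^'n \<Rightarrow> real \<Rightarrow> real"
  assumes "continuous_on (cball 0 R \<times> tint T) (\<lambda>(x,t). f x t)" "t \<in> tint T"
  shows "continuous_on {0..R} (\<lambda>\<rho>. prof f \<rho> t)"
proof -
  have "continuous_on {0..R} (\<lambda>\<rho>. (\<lambda>(x,t). f x t) (\<rho> *\<^sub>R (e1::real^'n), t))"
  proof (rule continuous_on_compose2[OF assms(1)])
    show "continuous_on {0..R} (\<lambda>\<rho>. (\<rho> *\<^sub>R (e1::real^'n), t))"
      by (intro continuous_intros)
    show "(\<lambda>\<rho>. (\<rho> *\<^sub>R (e1::real^'n), t)) ` {0..R} \<subseteq> cball 0 R \<times> tint T"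
      using assms(2) by (auto simp: norm_e1)
  qed
  then show ?thesis by (simp add: prof_def)
qed

theorem lemma3p3:
  fixes R chi0 a k Cv :: real
  assumes "CARD('n) \<ge> 3"
    and "0 < R" and "0 < chi0" and "0 \<le> a" and "0 < k" and "0 < Cv"
  shows "\<exists>C>0. \<forall>(\<gamma>::real) (m::real) (chi::real \<Rightarrow> real) (u0::real^'n \<Rightarrow> real) (T::ereal)
            (u::real^'n \<Rightarrow> real \<Rightarrow> real) (v::real^'n \<Rightarrow> real \<Rightarrow> real).
      0 < \<gamma> \<and> \<gamma> < 1 \<and> 1 \<le> m \<and>
      cond_C1 chi chi0 a k \<and> cond_C2 chi (eta R u0) \<and> init_ok R u0 \<and>
      ks_maximal R m chi u0 T u v \<and>
      (\<forall>t\<in>tint T. radial R (\<lambda>x. u x t) \<and> radial R (\<lambda>x. v x t)) \<and>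
      (\<forall>x\<in>ball 0 R. \<forall>t\<in>tint T. x \<noteq> 0 \<longrightarrow> v x t \<le> Cv * norm x powr (2 - real CARD('n)))
      \<longrightarrow> (\<forall>t\<in>tint T. \<forall>s0\<in>{0<..<R ^ CARD('n)}.
            I2 \<gamma> chi u v s0 t \<ge> C * integral {0..s0} (\<lambda>s.
               s powr (-\<gamma> + (1 - 2 / real CARD('n)) * k) * (s0 - s)
               * wfun u s t * deriv (\<lambda>\<sigma>. wfun u \<sigma> t) s))"
proof -
  define N where "N = real CARD('n)"
  have N3: "3 \<le> N" using assms(1) by (simp add: N_def)
  define K where "K = a * R powr (N - 2) + Cv"
  have K: "0 < K" unfolding K_def using assms by (intro add_nonneg_pos) auto
  define C0 where "C0 = chi0 * K powr (-k)"
  have C0: "0 < C0" using K assms by (simp add: C0_def)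
  define c where "c = (1 - 2 / N) * k"
  have c: "0 < c" using N3 assms by (simp add: c_def field_simps)
  show ?thesis
  proof (rule exI[of _ "N * C0"], intro conjI allI impI ballI)
    show "0 < N * C0" using N3 C0 by simp
    fix \<gamma> m :: real and chi :: "real \<Rightarrow> real" and u0 :: "real^'n \<Rightarrow> real" and T :: ereal
      and u v :: "real^'n \<Rightarrow> real \<Rightarrow> real" and t s0 :: real
    assume H: "0 < \<gamma> \<and> \<gamma> < 1 \<and> 1 \<le> m \<and>
      cond_C1 chi chi0 a k \<and> cond_C2 chi (eta R u0) \<and> init_ok R u0 \<and>
      ks_maximal R m chi u0 T u v \<and>
      (\<forall>t\<in>tint T. radial R (\<lambda>x. u x t) \<and> radial R (\<lambda>x. v x t)) \<and>
      (\<forall>x\<in>ball 0 R. \<forall>t\<in>tint T. x \<noteq> 0 \<longrightarrow> v x t \<le> Cv * norm x powr (2 - real CARD('n)))"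
      and t: "t \<in> tint T" and s0: "s0 \<in> {0<..<R ^ CARD('n)}"
    have g: "0 < \<gamma>" "\<gamma> < 1" using H by auto
    have C1: "\<And>s. s > 0 \<Longrightarrow> chi s \<ge> chi0 * (a + s) powr (-k)"
      using H by (auto simp: cond_C1_def)
    have chidiff: "\<And>s. s > 0 \<Longrightarrow> chi differentiable (at s)"
      using H by (auto simp: cond_C2_def)
    have sol: "ks_sol R m chi u0 T u v" using H by (simp add: ks_maximal_def)
    have ucont: "continuous_on (cball 0 R \<times> tint T) (\<lambda>(x,t). u x t)"
      using sol by (simp add: ks_sol_def C21_def C2x_def)
    have vcont: "continuous_on (cball 0 R \<times> tint T) (\<lambda>(x,t). v x t)"
      using sol by (simp add: ks_sol_def C21_def C2x_def)
    have upos: "\<And>x. x \<in> cball 0 R \<Longrightarrow> 0 \<le> u x t" and vpos: "\<And>x. x \<in> cball 0 R \<Longrightarrow> 0 < v x t"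
      using sol t by (auto simp: ks_sol_def)
    have vbd: "\<And>x. x \<in> ball 0 R \<Longrightarrow> x \<noteq> 0 \<Longrightarrow> v x t \<le> Cv * norm x powr (2 - N)"
      using H t by (auto simp: N_def)
    define gg where "gg = (\<lambda>\<rho>. prof u \<rho> t)"
    define hh where "hh = (\<lambda>\<rho>. prof v \<rho> t)"
    have gc: "continuous_on {0..R} gg" unfolding gg_def by (rule prof_cont[OF ucont t])
    have hc: "continuous_on {0..R} hh" unfolding hh_def by (rule prof_cont[OF vcont t])
    have gnn: "\<And>\<rho>. \<rho> \<in> {0..R} \<Longrightarrow> 0 \<le> gg \<rho>"
      unfolding gg_def prof_def by (rule upos) (auto simp: norm_e1)
    have hpos: "\<And>\<rho>. \<rho> \<in> {0..R} \<Longrightarrow> 0 < hh \<rho>"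
      unfolding hh_def prof_def by (rule vpos) (auto simp: norm_e1)
    have chic: "continuous_on {0<..} chi"
      using chidiff by (intro continuous_at_imp_continuous_on) (auto intro: differentiable_imp_continuous_within)
    have chc: "continuous_on {0..R} (\<lambda>\<rho>. chi (hh \<rho>))"
      by (rule continuous_on_compose2[OF chic hc]) (use hpos in auto)
    define I where "I = (\<lambda>x. integral {0..x} (\<lambda>\<rho>. \<rho>^(CARD('n)-1) * gg \<rho>))"
    have Ic: "continuous_on {0..R} I" unfolding I_def
      by (intro indefinite_integral_continuous_1 integrable_continuous_interval continuous_intros gc)
    have W: "\<And>s. wfun u s t = I (s powr (1/N))"
      by (simp add: wfun_def I_def gg_def N_def)
    have Wv: "\<And>s. wfun v s t = integral {0..s powr (1/N)} (\<lambda>\<rho>. \<rho>^(CARD('n)-1) * hh \<rho>)"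
      by (simp add: wfun_def hh_def N_def)
    have s0p: "0 < s0" "s0 < R ^ CARD('n)" using s0 by auto
    have RN: "(R ^ CARD('n)) powr (1/N) = R"
      using assms(2) N3 by (simp add: N_def powr_realpow[symmetric] powr_powr)
    have rlt: "\<And>s. 0 \<le> s \<Longrightarrow> s < R ^ CARD('n) \<Longrightarrow> s powr (1/N) < R"
    proof -
      fix s :: real assume "0 \<le> s" "s < R ^ CARD('n)"
      then have "s powr (1/N) < (R ^ CARD('n)) powr (1/N)"
        using N3 by (intro powr_less_mono2) auto
      then show "s powr (1/N) < R" using RN by simp
    qed
    have s0R: "s0 powr (1/N) \<le> R" using rlt[of s0] s0p by simp
    have dW: "\<And>s. 0 < s \<Longrightarrow> s \<le> s0 \<Longrightarrow> deriv (\<lambda>\<sigma>. wfun u \<sigma> t) s = gg (s powr (1/N)) / N"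
      unfolding wfun_def gg_def N_def
      by (rule deriv_wf[OF gc[unfolded gg_def]]) (use s0p rlt N3 in \<open>auto simp: N_def\<close>)
    have dV: "\<And>s. 0 < s \<Longrightarrow> s \<le> s0 \<Longrightarrow> deriv (\<lambda>\<sigma>. wfun v \<sigma> t) s = hh (s powr (1/N)) / N"
      unfolding wfun_def hh_def N_def
      by (rule deriv_wf[OF hc[unfolded hh_def]]) (use s0p rlt N3 in \<open>auto simp: N_def\<close>)
    define \<Phi> where "\<Phi> = (\<lambda>s. (s0 - s) * chi (hh (s powr (1/N))) * I (s powr (1/N)) * (gg (s powr (1/N)) / N))"
    define \<Psi> where "\<Psi> = (\<lambda>s. s powr c * (s0 - s) * I (s powr (1/N)) * (gg (s powr (1/N)) / N))"
    have N0: "0 < N" using N3 by simp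
    have Phic: "continuous_on {0..s0} \<Phi>" unfolding \<Phi>_def
      by (intro continuous_intros cont_rootcomp[OF chc N0] cont_rootcomp[OF Ic N0] cont_rootcomp[OF gc N0])
         (use s0p s0R N0 in auto)
    have Psic: "continuous_on {0..s0} \<Psi>" unfolding \<Psi>_def
      by (intro continuous_intros cont_rootcomp[OF Ic N0] cont_rootcomp[OF gc N0] continuous_on_powr')
         (use s0p s0R c N0 in auto)
    have iPhi: "(\<lambda>s. s powr (-\<gamma>) * \<Phi> s) integrable_on {0..s0}"
      by (rule int_powr_cont[OF Phic g s0p(1)])
    have iPsi: "(\<lambda>s. s powr (-\<gamma>) * \<Psi> s) integrable_on {0..s0}"
      by (rule int_powr_cont[OF Psic g s0p(1)])
    have eq1: "integral {0..s0} (\<lambda>s.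
      s powr (-\<gamma>) * (s0 - s) * chi (real CARD('n) * deriv (\<lambda>\<sigma>. wfun v \<sigma> t) s)
      * wfun u s t * deriv (\<lambda>\<sigma>. wfun u \<sigma> t) s) = integral {0..s0} (\<lambda>s. s powr (-\<gamma>) * \<Phi> s)"
    proof (rule integral_spike[of "{0}"])
      fix s assume "s \<in> {0..s0} - {0}"
      then have "0 < s" "s \<le> s0" by auto
      then show "s powr (-\<gamma>) * \<Phi> s = s powr (-\<gamma>) * (s0 - s) * chi (real CARD('n) * deriv (\<lambda>\<sigma>. wfun v \<sigma> t) s)
      * wfun u s t * deriv (\<lambda>\<sigma>. wfun u \<sigma> t) s"
        using dW dV N0 by (simp add: \<Phi>_def W N_def[symmetric])
    qed auto
    have eq2: "integral {0..s0} (\<lambda>s.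
               s powr (-\<gamma> + (1 - 2 / real CARD('n)) * k) * (s0 - s)
               * wfun u s t * deriv (\<lambda>\<sigma>. wfun u \<sigma> t) s) = integral {0..s0} (\<lambda>s. s powr (-\<gamma>) * \<Psi> s)"
    proof (rule integral_spike[of "{0}"])
      fix s assume "s \<in> {0..s0} - {0}"
      then have "0 < s" "s \<le> s0" by auto
      then show "s powr (-\<gamma>) * \<Psi> s = s powr (-\<gamma> + (1 - 2 / real CARD('n)) * k) * (s0 - s)
               * wfun u s t * deriv (\<lambda>\<sigma>. wfun u \<sigma> t) s"
        using dW powr_add[of s "-\<gamma>" c] by (simp add: \<Psi>_def W N_def[symmetric] c_def)
    qed auto
    have pw: "C0 * (s powr (-\<gamma>) * \<Psi> s) \<le> s powr (-\<gamma>) * \<Phi> s" if sS: "s \<in> {0..s0}" for s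
    proof (cases "s = 0")
      case True then show ?thesis by simp
    next
      case False
      then have sp: "0 < s" "s \<le> s0" using sS by auto
      define r where "r = s powr (1/N)"
      have r: "0 < r" "r < R" using sp s0p rlt by (auto simp: r_def)
      have key: "C0 * s powr c \<le> chi (hh r)"
      proof -
        have hr: "0 < hh r" using hpos r by auto
        have "hh r \<le> Cv * norm (r *\<^sub>R (e1::real^'n)) powr (2 - N)"
          unfolding hh_def prof_def by (rule vbd) (use r norm_e1[where 'n='n] in \<open>auto\<close>)
        then have h1: "hh r \<le> Cv * r powr (2 - N)" using r by (simp add: norm_e1)
        have "R powr (2 - N) \<le> r powr (2 - N)"
          using r N3 by (intro powr_mono2') auto
        then have "a * (R powr (N - 2) * R powr (2 - N)) \<le> a * (R powr (N - 2) * r powr (2 - N))"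
          using assms(4) by (intro mult_left_mono) auto
        moreover have "R powr (N - 2) * R powr (2 - N) = 1"
          using assms(2) by (simp add: powr_add[symmetric])
        ultimately have "a \<le> a * R powr (N - 2) * r powr (2 - N)" by (simp add: mult.assoc)
        with h1 have "a + hh r \<le> K * r powr (2 - N)"
          by (simp add: K_def distrib_right)
        then have "(K * r powr (2 - N)) powr (-k) \<le> (a + hh r) powr (-k)"
          using hr assms(4,5) by (intro powr_mono2') auto
        moreover have "(K * r powr (2 - N)) powr (-k) = K powr (-k) * s powr c"
          using K r sp N0 by (simp add: powr_mult powr_powr r_def c_def field_simps)
        ultimately have "chi0 * (K powr (-k) * s powr c) \<le> chi0 * (a + hh r) powr (-k)"
          using assms(3) by (intro mult_left_mono) auto
        also have "\<dots> \<le> chi (hh r)" using C1[OF hr] .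
        finally show ?thesis by (simp add: C0_def mult.assoc)
      qed
      have Inn: "0 \<le> I r" unfolding I_def
        by (rule integral_nonneg) (use r gnn in \<open>auto intro!: integrable_continuous_interval continuous_intros
            continuous_on_subset[OF gc]\<close>)
      have Q: "0 \<le> (s0 - s) * I r * (gg r / N)"
        using sp Inn gnn[of r] r N0 by auto
      have "C0 * \<Psi> s = (C0 * s powr c) * ((s0 - s) * I r * (gg r / N))"
        by (simp add: \<Psi>_def r_def mult_ac)
      also have "\<dots> \<le> chi (hh r) * ((s0 - s) * I r * (gg r / N))"
        by (rule mult_right_mono[OF key Q])
      also have "\<dots> = \<Phi> s" by (simp add: \<Phi>_def r_def mult_ac)
      finally have "C0 * \<Psi> s \<le> \<Phi> s" .
      then have "s powr (-\<gamma>) * (C0 * \<Psi> s) \<le> s powr (-\<gamma>) * \<Phi> s"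
        by (intro mult_left_mono) auto
      then show ?thesis by (simp add: mult_ac)
    qed
    have "C0 * integral {0..s0} (\<lambda>s. s powr (-\<gamma>) * \<Psi> s) \<le> integral {0..s0} (\<lambda>s. s powr (-\<gamma>) * \<Phi> s)"
      using integral_le[OF integrable_on_mult_right[OF iPsi, of C0] iPhi pw] by simp
    then have "N * (C0 * integral {0..s0} (\<lambda>s. s powr (-\<gamma>) * \<Psi> s)) \<le> N * integral {0..s0} (\<lambda>s. s powr (-\<gamma>) * \<Phi> s)"
      using N0 by (intro mult_left_mono) auto
    then show "I2 \<gamma> chi u v s0 t \<ge> N * C0 * integral {0..s0} (\<lambda>s.
               s powr (-\<gamma> + (1 - 2 / real CARD('n)) * k) * (s0 - s)
               * wfun u s t * deriv (\<lambda>\<sigma>. wfun u \<sigma> t) s)"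
      unfolding I2_def eq1 eq2 by (simp add: N_def mult.assoc)
  qed
qed

end
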